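(* Fix parameters $\mathfrak h=(h,\varepsilon,\theta)$. Let $\chi$ satisfy (OBS.1) and $f$ satisfy (RHS.2); if (RHS.2b) holds, assume moreover that condition (M.1) holds. Let $w_h,v_h\in\mathbb V_h$ satisfy $$\mathbb T_{\mathfrak h}[w_h;f,\chi](z)\le0\le\mathbb T_{\mathfrak h}[v_h;f,\chi](z)\qquad\forall z\in\mathcal N_h^I,$$ and $w_h(z)\le v_h(z)$ for all $z\in\mathcal N_h^b$. Then $w_h(z)\le v_h(z)$ for all $z\in\mathcal N_h$.
   Context: Setting: $\Omega\subset\mathbb R^d$ ($d\ge1$) is a bounded domain with continuous boundary. For $r>0$, $\Omega^{(r)}=\{x\in\Omega:\operatorname{dist}(x,\partial\Omega)>r\}$. $\mathcal T_h$ is a mesh of closed simplices, $h=\max_T\operatorname{diam}T$, $\Omega_h$ the interior of the union of the simplices, with $\Omega^{(h)}\subset\Omega_h\subset\Omega$; $\mathcal N_h$ is the set of vertices. $\mathbb V_h$ is the space of continuous piecewise linear functions on $\mathcal T_h$ with hat basis $\{\hat\varphi_z\}$ and Lagrange interpolant $\mathcal I_h$. Parameters $\mathfrak h=(h,\varepsilon,\theta)$ with $\varepsilon\in[h,\operatorname{diam}\Omega]$, $0<\theta\le1$. $\mathcal N_h^I=\mathcal N_h\cap\Omega^{(2\varepsilon)}$, $\mathcal N_h^b=\mathcal N_h\setminus\mathcal N_h^I$. $\mathbb S_\theta$ is a finite symmetric subset of the unit sphere $\mathbb S$ such that each $v\in\mathbb S$ has $v_\theta\in\mathbb S_\theta$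 with $|v-v_\theta|\le\theta$. For $z\in\mathcal N_h^I$, $\mathcal N_{\mathfrak h}(z)=\{z\}\cup\{z+\varepsilon v_\theta:v_\theta\in\mathbb S_\theta\}$ and $-\Delta^\diamond_{\infty,\mathfrak h}w(z)=\varepsilon^{-2}\big(2w(z)-\max_{x\in\mathcal N_{\mathfrak h}(z)}\mathcal I_hw(x)-\min_{x\in\mathcal N_{\mathfrak h}(z)}\mathcal I_hw(x)\big)$ for $w\in C(\overline\Omega)$. $\widetilde{\mathcal N}_{\mathfrak h}(z)=\{z\}\cup\{z'\in\mathcal N_h:\exists v_\theta\in\mathbb S_\theta,\ \hat\varphi_{z'}(z+\varepsilon v_\theta)>0\}$. (M.1): for every nonempty $S\subset\mathcal N_h^I$ there exist $z\in S$, $z'\in\mathcal N_h\setminus S$ with $z'\in\widetilde{\mathcal N}_{\mathfrak h}(z)$. (RHS.2): either (RHS.2a) $\sup_\Omega f<0$ or $\inf_\Omega f>0$, or (RHS.2b) $f\equiv0$. (OBS.1): $\chi\in C(\overline\Omega)$ and $\chi<g$ on $\partial\Omega$ for a given boundary datum $g\in C(\partial\Omega)$. Discrete obstacle operator: $\mathbb T_{\mathfrak h}[w;f,\chi](z)=\min\{-\Delta^\diamond_{\infty,\mathfrak h}w(z)-f(z),\,w(z)-\chi(z)\}$ for $z\in\mathcal N_h^I$. *)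

theory Defs
  imports "HOL-Analysis.Analysis"
begin

definition inner_dom :: "'a::euclidean_space set \<Rightarrow> real \<Rightarrow> 'a set" where
  "inner_dom \<Omega> r = {x \<in> \<Omega>. infdist x (frontier \<Omega>) > r}"

definition continuous_boundary_domain :: "'a::euclidean_space set \<Rightarrow> bool" where
  "continuous_boundary_domain \<Omega> \<longleftrightarrow>
     open \<Omega> \<and> connected \<Omega> \<and> bounded \<Omega> \<and> \<Omega> \<noteq> {} \<and>
     (\<forall>x\<in>frontier \<Omega>. \<exists>e r \<gamma>. norm e = 1 \<and> r > 0 \<and>
        continuous_on {u. u \<bullet> e = 0} (\<gamma> :: 'a \<Rightarrow> real) \<and>
        (\<forall>y\<in>ball x r. y \<in> \<Omega> \<longleftrightarrow> y \<bullet> e > \<gamma> (y - (y \<bullet> e) *\<^sub>R e)))"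

text \<open>A mesh is represented by the family of vertex sets of its (closed) simplices;
  the simplex with vertex set S is  convex hull S.\<close>
definition simplicial_mesh :: "'a::euclidean_space set set \<Rightarrow> bool" where
  "simplicial_mesh Th \<longleftrightarrow> finite Th \<and> Th \<noteq> {} \<and>
     (\<forall>S\<in>Th. finite S \<and> card S = DIM('a) + 1 \<and> \<not> affine_dependent S) \<and>
     (\<forall>S1\<in>Th. \<forall>S2\<in>Th. convex hull S1 \<inter> convex hull S2 = convex hull (S1 \<inter> S2))"

definition mesh_size :: "'a::euclidean_space set set \<Rightarrow> real" where
  "mesh_size Th = Max ((\<lambda>S. diameter (convex hull S)) ` Th)"

definition mesh_domain :: "'a::euclidean_space set set \<Rightarrow> 'a set" where
  "mesh_domain Th = interior (\<Union>S\<in>Th. convex hull S)"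

definition nodes :: "'a::euclidean_space set set \<Rightarrow> 'a set" where
  "nodes Th = \<Union> Th"

definition bary :: "'a::euclidean_space set \<Rightarrow> 'a \<Rightarrow> 'a \<Rightarrow> real" where
  "bary S z x = (THE c. \<exists>u. sum u S = 1 \<and> (\<Sum>y\<in>S. u y *\<^sub>R y) = x \<and> u z = c)"

definition hat :: "'a::euclidean_space set set \<Rightarrow> 'a \<Rightarrow> 'a \<Rightarrow> real" where
  "hat Th z x =
     (if \<exists>S\<in>Th. z \<in> S \<and> x \<in> convex hull S
      then bary (SOME S. S \<in> Th \<and> z \<in> S \<and> x \<in> convex hull S) z x else 0)"

definition interp :: "'a::euclidean_space set set \<Rightarrow> ('a \<Rightarrow> real) \<Rightarrow> 'a \<Rightarrow> real" where
  "interp Th w x = (\<Sum>z\<in>nodes Th. w z * hat Th z x)"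

text \<open>V_h: continuous piecewise linear functions = span of the hat basis (on the closure of Omega_h).\<close>
definition Vh :: "'a::euclidean_space set set \<Rightarrow> ('a \<Rightarrow> real) set" where
  "Vh Th = {w. \<exists>c. \<forall>x\<in>(\<Union>S\<in>Th. convex hull S). w x = (\<Sum>z\<in>nodes Th. c z * hat Th z x)}"

definition direction_set :: "real \<Rightarrow> 'a::euclidean_space set \<Rightarrow> bool" where
  "direction_set \<theta> S \<longleftrightarrow> finite S \<and> S \<subseteq> sphere 0 1 \<and> (\<forall>v\<in>S. - v \<in> S) \<and>
     (\<forall>v\<in>sphere 0 1. \<exists>v\<^sub>\<theta>\<in>S. norm (v - v\<^sub>\<theta>) \<le> \<theta>)"

definition interior_nodes :: "'a::euclidean_space set \<Rightarrow> 'a set set \<Rightarrow> real \<Rightarrow> 'a set" where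
  "interior_nodes \<Omega> Th \<epsilon> = nodes Th \<inter> inner_dom \<Omega> (2 * \<epsilon>)"

definition boundary_nodes :: "'a::euclidean_space set \<Rightarrow> 'a set set \<Rightarrow> real \<Rightarrow> 'a set" where
  "boundary_nodes \<Omega> Th \<epsilon> = nodes Th - interior_nodes \<Omega> Th \<epsilon>"

definition stencil :: "'a::euclidean_space set \<Rightarrow> real \<Rightarrow> 'a \<Rightarrow> 'a set" where
  "stencil S\<^sub>\<theta> \<epsilon> z = insert z ((\<lambda>v. z + \<epsilon> *\<^sub>R v) ` S\<^sub>\<theta>)"

definition neg_inf_lap :: "'a::euclidean_space set set \<Rightarrow> 'a set \<Rightarrow> real \<Rightarrow> ('a \<Rightarrow> real) \<Rightarrow> 'a \<Rightarrow> real" where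
  "neg_inf_lap Th S\<^sub>\<theta> \<epsilon> w z =
     (2 * w z - Max (interp Th w ` stencil S\<^sub>\<theta> \<epsilon> z) - Min (interp Th w ` stencil S\<^sub>\<theta> \<epsilon> z)) / \<epsilon>\<^sup>2"

definition obstacle_op :: "'a::euclidean_space set set \<Rightarrow> 'a set \<Rightarrow> real \<Rightarrow> ('a \<Rightarrow> real) \<Rightarrow> ('a \<Rightarrow> real) \<Rightarrow> ('a \<Rightarrow> real) \<Rightarrow> 'a \<Rightarrow> real" where
  "obstacle_op Th S\<^sub>\<theta> \<epsilon> w f \<psi> z = min (neg_inf_lap Th S\<^sub>\<theta> \<epsilon> w z - f z) (w z - \<psi> z)"

definition ext_stencil :: "'a::euclidean_space set set \<Rightarrow> 'a set \<Rightarrow> real \<Rightarrow> 'a \<Rightarrow> 'a set" where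
  "ext_stencil Th S\<^sub>\<theta> \<epsilon> z = insert z {z' \<in> nodes Th. \<exists>v\<in>S\<^sub>\<theta>. hat Th z' (z + \<epsilon> *\<^sub>R v) > 0}"

definition cond_M1 :: "'a::euclidean_space set \<Rightarrow> 'a set set \<Rightarrow> 'a set \<Rightarrow> real \<Rightarrow> bool" where
  "cond_M1 \<Omega> Th S\<^sub>\<theta> \<epsilon> \<longleftrightarrow>
     (\<forall>S. S \<subseteq> interior_nodes \<Omega> Th \<epsilon> \<and> S \<noteq> {} \<longrightarrow>
        (\<exists>z\<in>S. \<exists>z'\<in>nodes Th - S. z' \<in> ext_stencil Th S\<^sub>\<theta> \<epsilon> z))"

end

theory Submission
  imports Defs
begin

lemma bary_eq:
  fixes S :: "'a::euclidean_space set"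
  assumes fin: "finite S" and ind: "\<not> affine_dependent S"
    and u: "sum u S = 1" "(\<Sum>y\<in>S. u y *\<^sub>R y) = x" and z: "z \<in> S"
  shows "bary S z x = u z"
  unfolding bary_def
proof (rule the_equality)
  show "\<exists>u'. sum u' S = 1 \<and> (\<Sum>y\<in>S. u' y *\<^sub>R y) = x \<and> u' z = u z" using u by blast
next
  fix c assume "\<exists>u'. sum u' S = 1 \<and> (\<Sum>y\<in>S. u' y *\<^sub>R y) = x \<and> u' z = c"
  then obtain u' where u': "sum u' S = 1" "(\<Sum>y\<in>S. u' y *\<^sub>R y) = x" "u' z = c" by blast
  show "c = u z"
  proof (rule ccontr)
    assume ne: "c \<noteq> u z"
    define U where "U = (\<lambda>y. u' y - u y)"
    have "sum U S = 0" using u u' by (simp add: U_def sum_subtractf)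
    moreover have "\<exists>v\<in>S. U v \<noteq> 0" using z ne u' by (auto simp: U_def)
    moreover have "(\<Sum>v\<in>S. U v *\<^sub>R v) = 0" using u u'
      by (simp add: U_def scaleR_diff_left sum_subtractf)
    ultimately have "affine_dependent S" using affine_dependent_explicit_finite[OF fin] by blast
    with ind show False by blast
  qed
qed

lemma bary_conform:
  fixes Th :: "'a::euclidean_space set set"
  assumes mesh: "simplicial_mesh Th" and S1: "S1 \<in> Th" and S2: "S2 \<in> Th"
    and x1: "x \<in> convex hull S1" and x2: "x \<in> convex hull S2" and z: "z \<in> S1"
  shows "bary S1 z x = (if z \<in> S2 then bary S2 z x else 0)"
proof -
  have f1: "finite S1" "\<not> affine_dependent S1" and f2: "finite S2" "\<not> affine_dependent S2"
    using mesh S1 S2 unfolding simplicial_mesh_def by auto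
  have "x \<in> convex hull (S1 \<inter> S2)" using mesh S1 S2 x1 x2 unfolding simplicial_mesh_def by blast
  then obtain u where u: "\<forall>y\<in>S1 \<inter> S2. 0 \<le> u y" "sum u (S1 \<inter> S2) = 1"
    "(\<Sum>y\<in>S1 \<inter> S2. u y *\<^sub>R y) = x"
    using convex_hull_finite[of "S1 \<inter> S2"] f1 by auto
  define u' where "u' = (\<lambda>y. if y \<in> S1 \<inter> S2 then u y else 0)"
  have A: "sum u' S = 1 \<and> (\<Sum>y\<in>S. u' y *\<^sub>R y) = x" if "S = S1 \<or> S = S2" for S
  proof -
    have sub: "S1 \<inter> S2 \<subseteq> S" "finite S" using that f1 f2 by auto
    have "sum u' S = sum u' (S1 \<inter> S2)"
      by (rule sum.mono_neutral_right) (use sub in \<open>auto simp: u'_def\<close>)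
    moreover have "(\<Sum>y\<in>S. u' y *\<^sub>R y) = (\<Sum>y\<in>S1 \<inter> S2. u' y *\<^sub>R y)"
      by (rule sum.mono_neutral_right) (use sub in \<open>auto simp: u'_def\<close>)
    ultimately show ?thesis using u by (simp add: u'_def)
  qed
  have b1: "bary S1 z x = u' z" using bary_eq[OF f1] A z by blast
  show ?thesis
  proof (cases "z \<in> S2")
    case True
    then have "bary S2 z x = u' z" using bary_eq[OF f2] A by blast
    then show ?thesis using b1 True by simp
  next
    case False then show ?thesis using b1 by (simp add: u'_def)
  qed
qed

lemma hat_eq:
  fixes Th :: "'a::euclidean_space set set"
  assumes mesh: "simplicial_mesh Th" and S0: "S0 \<in> Th" and x: "x \<in> convex hull S0"
  shows "hat Th z x = (if z \<in> S0 then bary S0 z x else 0)"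
proof (cases "\<exists>S\<in>Th. z \<in> S \<and> x \<in> convex hull S")
  case True
  define S where "S = (SOME S. S \<in> Th \<and> z \<in> S \<and> x \<in> convex hull S)"
  have S: "S \<in> Th \<and> z \<in> S \<and> x \<in> convex hull S" unfolding S_def
    by (rule someI_ex) (use True in blast)
  have "hat Th z x = bary S z x" using True by (simp add: hat_def S_def)
  also have "\<dots> = (if z \<in> S0 then bary S0 z x else 0)"
    using bary_conform[OF mesh _ S0 _ x] S by blast
  finally show ?thesis .
next
  case False
  then show ?thesis using S0 x by (auto simp: hat_def)
qed

lemma hat_good:
  fixes Th :: "'a::euclidean_space set set"
  assumes mesh: "simplicial_mesh Th" and x: "x \<in> (\<Union>S\<in>Th. convex hull S)"
  shows "(\<forall>z. 0 \<le> hat Th z x) \<and> sum (\<lambda>z. hat Th z x) (nodes Th) = 1"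
proof -
  obtain S0 where S0: "S0 \<in> Th" "x \<in> convex hull S0" using x by blast
  have f0: "finite S0" "\<not> affine_dependent S0" using mesh S0 unfolding simplicial_mesh_def by auto
  obtain u where u: "\<forall>y\<in>S0. 0 \<le> u y" "sum u S0 = 1" "(\<Sum>y\<in>S0. u y *\<^sub>R y) = x"
    using convex_hull_finite[of S0] f0 S0 by auto
  have hz: "hat Th z x = (if z \<in> S0 then u z else 0)" for z
    using hat_eq[OF mesh S0] bary_eq[OF f0 u(2,3)] by simp
  have finN: "finite (nodes Th)" using mesh unfolding simplicial_mesh_def nodes_def by auto
  have sub: "S0 \<subseteq> nodes Th" using S0 unfolding nodes_def by auto
  have "sum (\<lambda>z. hat Th z x) (nodes Th) = sum (\<lambda>z. hat Th z x) S0"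
    by (rule sum.mono_neutral_right) (use finN sub hz in auto)
  also have "\<dots> = sum u S0" by (simp add: hz)
  finally show ?thesis using hz u by auto
qed


lemma mesh_size_pos:
  fixes Th :: "'a::euclidean_space set set"
  assumes mesh: "simplicial_mesh Th"
  shows "0 < mesh_size Th"
proof -
  obtain S where S: "S \<in> Th" using mesh unfolding simplicial_mesh_def by auto
  have fS: "finite S" "card S = DIM('a) + 1" using mesh S unfolding simplicial_mesh_def by auto
  then have "card S \<ge> 2" using DIM_positive[where 'a='a] by linarith
  then obtain a b where ab: "a \<in> S" "b \<in> S" "a \<noteq> b"
    by (metis One_nat_def card_le_Suc0_iff_eq fS(1) not_less_eq_eq numeral_2_eq_2)
  have "0 < dist a b" using ab by simp
  also have "\<dots> \<le> diameter (convex hull S)"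
    by (rule diameter_bounded_bound) (use fS ab finite_imp_bounded_convex_hull hull_inc in auto)
  also have "\<dots> \<le> mesh_size Th" unfolding mesh_size_def
    by (rule Max_ge) (use mesh S in \<open>auto simp: simplicial_mesh_def\<close>)
  finally show ?thesis .
qed

lemma stencil_inner:
  fixes \<Omega> :: "'a::euclidean_space set"
  assumes z: "z \<in> inner_dom \<Omega> (2 * \<epsilon>)" and e: "0 < \<epsilon>" "h \<le> \<epsilon>"
    and S: "S \<subseteq> sphere 0 1" and x: "x \<in> stencil S \<epsilon> z"
  shows "x \<in> inner_dom \<Omega> h"
proof -
  have zO: "z \<in> \<Omega>" and zd: "infdist z (frontier \<Omega>) > 2 * \<epsilon>" using z by (auto simp: inner_dom_def)
  have dx: "dist z x \<le> \<epsilon>" using x S e by (auto simp: stencil_def dist_norm)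
  have "infdist z (frontier \<Omega>) \<le> infdist x (frontier \<Omega>) + dist z x" by (rule infdist_triangle)
  then have d: "infdist x (frontier \<Omega>) > h" using zd dx e by linarith
  have "x \<in> \<Omega>"
  proof (rule ccontr)
    assume xn: "x \<notin> \<Omega>"
    have "closed_segment z x \<inter> frontier \<Omega> \<noteq> {}"
      by (rule connected_Int_frontier) (use zO xn in auto)
    then obtain p where p: "p \<in> closed_segment z x" "p \<in> frontier \<Omega>" by blast
    have "dist z p \<le> dist z x" using p(1) by (simp add: dist_commute segment_bound(1) dist_norm)
    moreover have "infdist z (frontier \<Omega>) \<le> dist z p" using p(2) by (rule infdist_le)
    ultimately show False using zd dx e by linarith
  qed
  then show ?thesis using d by (simp add: inner_dom_def)
qed


lemma interp_diff: "interp Th (\<lambda>z. w z - v z) x = interp Th w x - interp Th v x"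
  unfolding interp_def by (simp only: left_diff_distrib sum_subtractf)

lemma interp_upper:
  assumes "\<forall>y. 0 \<le> hat Th y x" "sum (\<lambda>y. hat Th y x) (nodes Th) = 1"
    and "\<forall>y\<in>nodes Th. hat Th y x > 0 \<longrightarrow> w y \<le> c"
  shows "interp Th w x \<le> c"
proof -
  have "interp Th w x \<le> (\<Sum>y\<in>nodes Th. c * hat Th y x)" unfolding interp_def
  proof (rule sum_mono)
    fix y assume y: "y \<in> nodes Th"
    show "w y * hat Th y x \<le> c * hat Th y x"
    proof (cases "hat Th y x > 0")
      case True then have "w y \<le> c" using assms(3) y by blast
      then show ?thesis using True by (simp add: mult_right_mono)
    next
      case False then have "hat Th y x = 0" using assms(1)[rule_format, of y] by linarith
      then show ?thesis by simp
    qed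
  qed
  also have "\<dots> = c * (\<Sum>y\<in>nodes Th. hat Th y x)" by (rule sum_distrib_left[symmetric])
  also have "\<dots> = c" using assms(2) by simp
  finally show ?thesis .
qed

lemma interp_lower:
  assumes "\<forall>y. 0 \<le> hat Th y x" "sum (\<lambda>y. hat Th y x) (nodes Th) = 1"
    and "\<forall>y\<in>nodes Th. hat Th y x > 0 \<longrightarrow> c \<le> w y"
  shows "c \<le> interp Th w x"
proof -
  have "interp Th (\<lambda>y. - w y) x \<le> - c"
    by (rule interp_upper) (use assms in auto)
  moreover have "interp Th (\<lambda>y. - w y) x = - interp Th w x"
    unfolding interp_def by (simp only: mult_minus_left sum_negf)
  ultimately show ?thesis by simp
qed

lemma interp_force:
  assumes fin: "finite (nodes Th)" and "\<forall>y. 0 \<le> hat Th y x" "sum (\<lambda>y. hat Th y x) (nodes Th) = 1"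
    and le: "\<forall>y\<in>nodes Th. hat Th y x > 0 \<longrightarrow> w y \<le> c"
    and ge: "c \<le> interp Th w x"
  shows "\<forall>y\<in>nodes Th. hat Th y x > 0 \<longrightarrow> w y = c"
proof -
  have nn: "0 \<le> (c - w y) * hat Th y x" if "y \<in> nodes Th" for y
  proof (cases "hat Th y x > 0")
    case True then have "w y \<le> c" using le that by blast
    then show ?thesis using True by simp
  next
    case False then have "hat Th y x = 0" using assms(2)[rule_format, of y] by linarith
    then show ?thesis by simp
  qed
  have "(\<Sum>y\<in>nodes Th. (c - w y) * hat Th y x) = (\<Sum>y\<in>nodes Th. c * hat Th y x) - interp Th w x"
    unfolding interp_def by (simp only: left_diff_distrib sum_subtractf)
  also have "(\<Sum>y\<in>nodes Th. c * hat Th y x) = c * (\<Sum>y\<in>nodes Th. hat Th y x)"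
    by (rule sum_distrib_left[symmetric])
  finally have eq: "(\<Sum>y\<in>nodes Th. (c - w y) * hat Th y x) = c - interp Th w x"
    using assms(3) by simp
  have "0 \<le> (\<Sum>y\<in>nodes Th. (c - w y) * hat Th y x)" by (rule sum_nonneg) (rule nn)
  then have "(\<Sum>y\<in>nodes Th. (c - w y) * hat Th y x) = 0" using ge eq by linarith
  then have z: "\<forall>y\<in>nodes Th. (c - w y) * hat Th y x = 0"
    using sum_nonneg_eq_0_iff[OF fin, of "\<lambda>y. (c - w y) * hat Th y x"] nn by blast
  show ?thesis
  proof (intro ballI impI)
    fix y assume "y \<in> nodes Th" "hat Th y x > 0"
    then show "w y = c" using z by force
  qed
qed


theorem theorem5p5:
  fixes \<Omega> :: "'a::euclidean_space set"
    and Th :: "'a set set"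
    and \<epsilon> \<theta> :: real
    and S\<^sub>\<theta> :: "'a set"
    and f \<psi> g w v :: "'a \<Rightarrow> real"
  assumes dom: "continuous_boundary_domain \<Omega>"
    and mesh: "simplicial_mesh Th"
    and mesh_between: "inner_dom \<Omega> (mesh_size Th) \<subseteq> mesh_domain Th" "mesh_domain Th \<subseteq> \<Omega>"
    and eps: "mesh_size Th \<le> \<epsilon>" "\<epsilon> \<le> diameter \<Omega>"
    and theta: "0 < \<theta>" "\<theta> \<le> 1"
    and dirs: "direction_set \<theta> S\<^sub>\<theta>"
    and OBS1: "continuous_on (closure \<Omega>) \<psi>" "continuous_on (frontier \<Omega>) g"
              "\<forall>x\<in>frontier \<Omega>. \<psi> x < g x"
    and RHS2: "(\<exists>c<0. \<forall>x\<in>\<Omega>. f x \<le> c) \<or> (\<exists>c>0. \<forall>x\<in>\<Omega>. f x \<ge> c) \<or>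
               ((\<forall>x\<in>\<Omega>. f x = 0) \<and> cond_M1 \<Omega> Th S\<^sub>\<theta> \<epsilon>)"
    and wV: "w \<in> Vh Th" and vV: "v \<in> Vh Th"
    and sub: "\<forall>z\<in>interior_nodes \<Omega> Th \<epsilon>. obstacle_op Th S\<^sub>\<theta> \<epsilon> w f \<psi> z \<le> 0"
    and super: "\<forall>z\<in>interior_nodes \<Omega> Th \<epsilon>. 0 \<le> obstacle_op Th S\<^sub>\<theta> \<epsilon> v f \<psi> z"
    and bdry: "\<forall>z\<in>boundary_nodes \<Omega> Th \<epsilon>. w z \<le> v z"
  shows "\<forall>z\<in>nodes Th. w z \<le> v z"
proof (rule ccontr)
  assume contra: "\<not> (\<forall>z\<in>nodes Th. w z \<le> v z)"
  define N where "N = nodes Th"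
  define I where "I = interior_nodes \<Omega> Th \<epsilon>"
  have finN: "finite N" using mesh unfolding simplicial_mesh_def nodes_def N_def by auto
  have epos: "0 < \<epsilon>" using mesh_size_pos[OF mesh] eps(1) by linarith
  have e2: "0 < \<epsilon>\<^sup>2" using epos by simp
  have finS: "finite S\<^sub>\<theta>" and sph: "S\<^sub>\<theta> \<subseteq> sphere 0 1" using dirs by (auto simp: direction_set_def)
  define P where "P = (\<lambda>z. stencil S\<^sub>\<theta> \<epsilon> z)"
  have finP: "finite (P z)" and zP: "z \<in> P z" for z using finS by (auto simp: P_def stencil_def)
  have IO: "z \<in> \<Omega>" if "z \<in> I" for z using that by (auto simp: I_def interior_nodes_def inner_dom_def)
  have good: "(\<forall>y. 0 \<le> hat Th y x) \<and> sum (\<lambda>y. hat Th y x) N = 1" if "z \<in> I" "x \<in> P z" for z x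
  proof -
    have "z \<in> inner_dom \<Omega> (2 * \<epsilon>)" using that by (auto simp: I_def interior_nodes_def)
    then have "x \<in> inner_dom \<Omega> (mesh_size Th)"
      using stencil_inner[OF _ epos eps(1) sph] that(2) by (auto simp: P_def)
    then have "x \<in> mesh_domain Th" using mesh_between(1) by blast
    then have "x \<in> (\<Union>S\<in>Th. convex hull S)" unfolding mesh_domain_def using interior_subset by blast
    then show ?thesis using hat_good[OF mesh] N_def by simp
  qed
  define \<delta> where "\<delta> = (\<lambda>z. w z - v z)"
  define M where "M = Max (\<delta> ` N)"
  have hM: "\<delta> z \<le> M" if "z \<in> N" for z using finN that by (simp add: M_def)
  obtain z0 where z0: "z0 \<in> N" "w z0 > v z0" using contra N_def by auto
  have Mpos: "M > 0" using hM[OF z0(1)] z0(2) by (simp add: \<delta>_def)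
  define S where "S = {z \<in> N. \<delta> z = M}"
  have finSS: "finite S" using finN by (simp add: S_def)
  have Sne: "S \<noteq> {}"
  proof -
    have "M \<in> \<delta> ` N" unfolding M_def using finN z0(1) by (intro Max_in) auto
    then show ?thesis by (auto simp: S_def)
  qed
  have SI: "S \<subseteq> I"
  proof
    fix z assume z: "z \<in> S"
    show "z \<in> I"
    proof (rule ccontr)
      assume "z \<notin> I"
      then have "z \<in> boundary_nodes \<Omega> Th \<epsilon>" using z by (auto simp: S_def N_def I_def boundary_nodes_def)
      then have "w z \<le> v z" using bdry by blast
      then show False using z Mpos by (auto simp: S_def \<delta>_def)
    qed
  qed
  have supp: "\<forall>y\<in>N. hat Th y x > 0 \<longrightarrow> y \<in> S"
    if "z \<in> I" "x \<in> P z" "M \<le> interp Th \<delta> x" for z x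
  proof -
    have g: "\<forall>y. 0 \<le> hat Th y x" "sum (\<lambda>y. hat Th y x) (nodes Th) = 1" using good[OF that(1,2)] N_def by auto
    have "\<forall>y\<in>nodes Th. hat Th y x > 0 \<longrightarrow> \<delta> y = M"
      by (rule interp_force[OF finN[unfolded N_def] g]) (use hM N_def that(3) in auto)
    then show ?thesis by (auto simp: S_def N_def)
  qed
  define Mx where "Mx = (\<lambda>u z. Max (interp Th u ` P z))"
  define mn where "mn = (\<lambda>u z. Min (interp Th u ` P z))"
  have Mxge: "interp Th u x \<le> Mx u z" if "x \<in> P z" for u x z
    using finP that by (simp add: Mx_def)
  have mnle: "mn u z \<le> interp Th u x" if "x \<in> P z" for u x z
    using finP that by (simp add: mn_def)
  have Mxin: "\<exists>x\<in>P z. interp Th u x = Mx u z" for u z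
  proof -
    have "Mx u z \<in> interp Th u ` P z" unfolding Mx_def using finP zP by (intro Max_in) auto
    then show ?thesis by auto
  qed
  have mnin: "\<exists>x\<in>P z. interp Th u x = mn u z" for u z
  proof -
    have "mn u z \<in> interp Th u ` P z" unfolding mn_def using finP zP by (intro Min_in) auto
    then show ?thesis by auto
  qed
  have mnMx: "mn u z \<le> Mx u z" for u z using mnle[OF zP] Mxge[OF zP] order_trans by blast
  have interp_split: "interp Th w x = interp Th v x + interp Th \<delta> x" for x
    using interp_diff[of Th w v x] by (simp add: \<delta>_def)
  have K: "Mx w z = Mx v z + M \<and> mn w z = mn v z + M \<and>
           2 * w z - Mx w z - mn w z \<le> \<epsilon>\<^sup>2 * f z \<and> \<epsilon>\<^sup>2 * f z \<le> 2 * v z - Mx v z - mn v z"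
    if zS: "z \<in> S" for z
  proof -
    have zI: "z \<in> I" using zS SI by blast
    have dz: "w z = v z + M" using zS by (auto simp: S_def \<delta>_def)
    have lapw: "neg_inf_lap Th S\<^sub>\<theta> \<epsilon> w z = (2 * w z - Mx w z - mn w z) / \<epsilon>\<^sup>2"
      by (simp add: neg_inf_lap_def Mx_def mn_def P_def)
    have lapv: "neg_inf_lap Th S\<^sub>\<theta> \<epsilon> v z = (2 * v z - Mx v z - mn v z) / \<epsilon>\<^sup>2"
      by (simp add: neg_inf_lap_def Mx_def mn_def P_def)
    have o1: "min (neg_inf_lap Th S\<^sub>\<theta> \<epsilon> w z - f z) (w z - \<psi> z) \<le> 0"
      using sub zI by (simp add: I_def obstacle_op_def)
    have o2: "0 \<le> neg_inf_lap Th S\<^sub>\<theta> \<epsilon> v z - f z" "0 \<le> v z - \<psi> z"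
      using super zI by (simp_all add: I_def obstacle_op_def)
    have "neg_inf_lap Th S\<^sub>\<theta> \<epsilon> w z - f z \<le> 0" using o1 o2(2) dz Mpos by linarith
    then have c: "2 * w z - Mx w z - mn w z \<le> \<epsilon>\<^sup>2 * f z" using e2 lapw
      by (simp add: divide_le_eq mult.commute)
    have d: "\<epsilon>\<^sup>2 * f z \<le> 2 * v z - Mx v z - mn v z" using o2(1) e2 lapv
      by (simp add: le_divide_eq mult.commute)
    have a: "Mx w z \<le> Mx v z + M"
    proof -
      obtain x where x: "x \<in> P z" "interp Th w x = Mx w z" using Mxin by blast
      have g: "\<forall>y. 0 \<le> hat Th y x" "sum (\<lambda>y. hat Th y x) (nodes Th) = 1" using good[OF zI x(1)] N_def by auto
      have "interp Th \<delta> x \<le> M" by (rule interp_upper[OF g]) (use hM N_def in auto)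
      then show ?thesis using x interp_split[of x] Mxge[OF x(1), of v] by linarith
    qed
    have b: "mn w z \<le> mn v z + M"
    proof -
      obtain x where x: "x \<in> P z" "interp Th v x = mn v z" using mnin by blast
      have g: "\<forall>y. 0 \<le> hat Th y x" "sum (\<lambda>y. hat Th y x) (nodes Th) = 1" using good[OF zI x(1)] N_def by auto
      have "interp Th \<delta> x \<le> M" by (rule interp_upper[OF g]) (use hM N_def in auto)
      then show ?thesis using x interp_split[of x] mnle[OF x(1), of w] by linarith
    qed
    show ?thesis using a b c d dz by linarith
  qed
  define W where "W = Max (w ` S)"
  have WS: "w z \<le> W" if "z \<in> S" for z using finSS that by (simp add: W_def)
  have Mxw: "Mx w z \<le> W" if zS: "z \<in> S" for z
  proof -
    have zI: "z \<in> I" using zS SI by blast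
    obtain y where y: "y \<in> P z" "interp Th w y = Mx w z" using Mxin by blast
    have g: "\<forall>y'. 0 \<le> hat Th y' y" "sum (\<lambda>y'. hat Th y' y) (nodes Th) = 1" using good[OF zI y(1)] N_def by auto
    have "M \<le> interp Th \<delta> y" using K[OF zS] interp_split[of y] Mxge[OF y(1), of v] y by linarith
    then have sp: "\<forall>y'\<in>N. hat Th y' y > 0 \<longrightarrow> y' \<in> S" using supp[OF zI y(1)] by blast
    have "interp Th w y \<le> W" by (rule interp_upper[OF g]) (use sp WS N_def in auto)
    then show ?thesis using y by simp
  qed
  from RHS2 show False
  proof (elim disjE conjE exE)
    fix c :: real assume c: "c < 0" "\<forall>x\<in>\<Omega>. f x \<le> c"
    have "W \<in> w ` S" unfolding W_def using finSS Sne by (intro Max_in) auto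
    then obtain z where zS: "z \<in> S" "w z = W" by auto
    have "f z \<le> c" using c IO SI zS by blast
    then have "\<epsilon>\<^sup>2 * f z < 0" using e2 c(1) by (simp add: mult_pos_neg)
    then show False using K[OF zS(1)] Mxw[OF zS(1)] mnMx[of w z] zS(2) by linarith
  next
    fix c :: real assume c: "c > 0" "\<forall>x\<in>\<Omega>. c \<le> f x"
    define V where "V = Min (v ` S)"
    have "V \<in> v ` S" unfolding V_def using finSS Sne by (intro Min_in) auto
    then obtain z where zS: "z \<in> S" "v z = V" by auto
    have VS: "V \<le> v z'" if "z' \<in> S" for z' using finSS that by (simp add: V_def)
    have zI: "z \<in> I" using zS SI by blast
    have "c \<le> f z" using c IO SI zS by blast
    then have fz: "\<epsilon>\<^sup>2 * f z > 0" using e2 c(1) by simp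
    obtain x where x: "x \<in> P z" "interp Th v x = mn v z" using mnin by blast
    have g: "\<forall>y'. 0 \<le> hat Th y' x" "sum (\<lambda>y'. hat Th y' x) (nodes Th) = 1" using good[OF zI x(1)] N_def by auto
    have "M \<le> interp Th \<delta> x" using K[OF zS(1)] interp_split[of x] mnle[OF x(1), of w] x by linarith
    then have sp: "\<forall>y'\<in>N. hat Th y' x > 0 \<longrightarrow> y' \<in> S" using supp[OF zI x(1)] by blast
    have "V \<le> interp Th v x" by (rule interp_lower[OF g]) (use sp VS N_def in auto)
    then show False using K[OF zS(1)] mnMx[of v z] zS(2) x fz by linarith
  next
    assume f0: "\<forall>x\<in>\<Omega>. f x = 0" and M1: "cond_M1 \<Omega> Th S\<^sub>\<theta> \<epsilon>"
    define S' where "S' = {z \<in> S. w z = W}"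
    have "W \<in> w ` S" unfolding W_def using finSS Sne by (intro Max_in) auto
    then have S'ne: "S' \<noteq> {}" by (auto simp: S'_def)
    have S'I: "S' \<subseteq> interior_nodes \<Omega> Th \<epsilon>" using SI by (auto simp: S'_def I_def)
    obtain z z' where zS': "z \<in> S'" and z': "z' \<in> nodes Th - S'" "z' \<in> ext_stencil Th S\<^sub>\<theta> \<epsilon> z"
      using M1 S'ne S'I unfolding cond_M1_def by meson
    have zS: "z \<in> S" and wz: "w z = W" using zS' by (auto simp: S'_def)
    have zI: "z \<in> I" using zS SI by blast
    have "f z = 0" using f0 IO zI by blast
    moreover have dz: "w z = v z + M" using zS by (auto simp: S_def \<delta>_def)
    ultimately have eqs: "mn w z = w z" "Mx w z = w z" "mn v z = v z" "Mx v z = v z"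
      using K[OF zS] Mxw[OF zS] mnMx[of w z] wz by auto
    have allS': "\<forall>y'\<in>N. hat Th y' x > 0 \<longrightarrow> y' \<in> S'" if x: "x \<in> P z" for x
    proof -
      have iw: "interp Th w x = w z" using mnle[OF x, of w] Mxge[OF x, of w] eqs by linarith
      have iv: "interp Th v x = v z" using mnle[OF x, of v] Mxge[OF x, of v] eqs by linarith
      have g: "\<forall>y'. 0 \<le> hat Th y' x" "sum (\<lambda>y'. hat Th y' x) (nodes Th) = 1" using good[OF zI x] N_def by auto
      have "M \<le> interp Th \<delta> x" using iw iv interp_split[of x] zS by (auto simp: S_def \<delta>_def)
      then have sp: "\<forall>y'\<in>N. hat Th y' x > 0 \<longrightarrow> y' \<in> S" using supp[OF zI x] by blast
      have "\<forall>y'\<in>nodes Th. hat Th y' x > 0 \<longrightarrow> w y' = W"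
        by (rule interp_force[OF finN[unfolded N_def] g]) (use sp WS N_def iw wz in auto)
      then show ?thesis using sp by (auto simp: S'_def N_def)
    qed
    show False
    proof (cases "z' = z")
      case True then show False using z' zS' by blast
    next
      case False
      then obtain u where u: "u \<in> S\<^sub>\<theta>" "hat Th z' (z + \<epsilon> *\<^sub>R u) > 0" "z' \<in> nodes Th"
        using z'(2) by (auto simp: ext_stencil_def)
      have "z + \<epsilon> *\<^sub>R u \<in> P z" using u(1) by (auto simp: P_def stencil_def)
      then have "z' \<in> S'" using allS' u N_def by blast
      then show False using z' by blast
    qed
  qed
qed

end
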